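(* Let $X,Y$ be complex Banach spaces and $\mathrm R$ a non-empty collection of sequences in $\mathbb R^n$. Let $(R(\mathbf t))_{\mathbf t>\mathbf 0}\subseteq L(X,Y)$ be a strongly continuous operator family with $\int_{(0,\infty)^n}\|R(\mathbf t)\|\,d\mathbf t<\infty$. If $f:\mathbb R^n\to X$ is bounded and $\mathrm R$-multi-almost periodic, then $$F(\mathbf t):=\int_{-\infty}^{t_1}\int_{-\infty}^{t_2}\cdots\int_{-\infty}^{t_n}R(\mathbf t-\mathbf s)f(\mathbf s)\,d\mathbf s,\quad\mathbf t=(t_1,\dots,t_n)\in\mathbb R^n,$$ is well-defined and $\mathrm R$-multi-almost periodic.
   Context: $\mathbf t>\mathbf 0$ means every component of $\mathbf t$ is strictly positive. A continuous $g:\mathbb R^n\to V$ ($V$ a Banach space) is $\mathrm R$-multi-almost periodic if for every $(\mathbf b_k)\in\mathrm R$ there exist a subsequence $(\mathbf b_{k_l})$ and $g^\ast:\mathbb R^n\to V$ with $g(\mathbf t+\mathbf b_{k_l})\to g^\ast(\mathbf t)$ uniformly for $\mathbf t\in\mathbb R^n$. *)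

theory Defs
  imports "HOL-Analysis.Analysis"
begin

definition multi_almost_periodic ::
  "(nat \<Rightarrow> real^'n) set \<Rightarrow> (real^'n \<Rightarrow> 'v::real_normed_vector) \<Rightarrow> bool" where
  "multi_almost_periodic Rc g \<longleftrightarrow>
     continuous_on UNIV g \<and>
     (\<forall>b\<in>Rc. \<exists>r g'. strict_mono r \<and>
        uniform_limit UNIV (\<lambda>l t. g (t + b (r l))) g' sequentially)"

definition pos_orthant :: "(real^'n) set" where
  "pos_orthant = {t. \<forall>i. 0 < t $ i}"

definition lower_orthant :: "real^'n \<Rightarrow> (real^'n) set" where
  "lower_orthant t = {s. \<forall>i. s $ i < t $ i}"

end

theory Submission
  imports Defs
begin

lemma integrable_approx_cbox:
  fixes f :: "'n::euclidean_space \<Rightarrow> 'b::banach"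
  assumes "\<And>e. e>0 \<Longrightarrow> \<exists>g k. g integrable_on cbox a b \<and> k integrable_on cbox a b \<and>
             integral (cbox a b) k < e \<and> (\<forall>x\<in>cbox a b. norm (f x - g x) \<le> k x)"
  shows "f integrable_on cbox a b"
proof -
  have "\<exists>d. gauge d \<and>
            (\<forall>p1 p2. p1 tagged_division_of cbox a b \<and> d fine p1 \<and>
                     p2 tagged_division_of cbox a b \<and> d fine p2 \<longrightarrow>
                     norm ((\<Sum>(x,K)\<in>p1. Henstock_Kurzweil_Integration.content K *\<^sub>R f x) - (\<Sum>(x,K)\<in>p2. Henstock_Kurzweil_Integration.content K *\<^sub>R f x)) < e)"
    if "e > 0" for e
  proof -
    have e: "e/6 > 0" using that by auto
    obtain g k where gi: "g integrable_on cbox a b" and ki: "k integrable_on cbox a b"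
      and kl: "integral (cbox a b) k < e/6" and fg: "\<forall>x\<in>cbox a b. norm (f x - g x) \<le> k x"
      using assms[OF e] by meson
    from has_integral[THEN iffD1, OF integrable_integral[OF gi], rule_format, OF e]
    obtain d1 where "gauge d1" and d10: "\<forall>p. p tagged_division_of cbox a b \<and> d1 fine p \<longrightarrow>
         norm ((\<Sum>(x,K)\<in>p. Henstock_Kurzweil_Integration.content K *\<^sub>R g x) - integral (cbox a b) g) < e/6"
      by (elim exE conjE)
    have d1: "\<And>p. \<lbrakk>p tagged_division_of cbox a b; d1 fine p\<rbrakk> \<Longrightarrow>
         norm ((\<Sum>(x,K)\<in>p. Henstock_Kurzweil_Integration.content K *\<^sub>R g x) - integral (cbox a b) g) < e/6"
      using d10 by blast
    from has_integral[THEN iffD1, OF integrable_integral[OF ki], rule_format, OF e]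
    obtain d2 where "gauge d2" and d20: "\<forall>p. p tagged_division_of cbox a b \<and> d2 fine p \<longrightarrow>
         norm ((\<Sum>(x,K)\<in>p. Henstock_Kurzweil_Integration.content K *\<^sub>R k x) - integral (cbox a b) k) < e/6"
      by (elim exE conjE)
    have d2: "\<And>p. \<lbrakk>p tagged_division_of cbox a b; d2 fine p\<rbrakk> \<Longrightarrow>
         norm ((\<Sum>(x,K)\<in>p. Henstock_Kurzweil_Integration.content K *\<^sub>R k x) - integral (cbox a b) k) < e/6"
      using d20 by blast
    have sk: "norm ((\<Sum>(x,K)\<in>p. Henstock_Kurzweil_Integration.content K *\<^sub>R f x) - (\<Sum>(x,K)\<in>p. Henstock_Kurzweil_Integration.content K *\<^sub>R g x)) < e/3"
      if p: "p tagged_division_of cbox a b" "d2 fine p" for p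
    proof -
      have "norm ((\<Sum>(x,K)\<in>p. Henstock_Kurzweil_Integration.content K *\<^sub>R f x) - (\<Sum>(x,K)\<in>p. Henstock_Kurzweil_Integration.content K *\<^sub>R g x))
          = norm (\<Sum>(x,K)\<in>p. Henstock_Kurzweil_Integration.content K *\<^sub>R (f x - g x))"
        by (simp add: sum_subtractf[symmetric] case_prod_unfold scaleR_diff_right)
      also have "\<dots> \<le> (\<Sum>(x,K)\<in>p. norm (Henstock_Kurzweil_Integration.content K *\<^sub>R (f x - g x)))"
        by (simp add: case_prod_unfold sum_norm_le)
      also have "\<dots> \<le> (\<Sum>(x,K)\<in>p. Henstock_Kurzweil_Integration.content K *\<^sub>R k x)"
      proof (rule sum_mono)
        fix xK assume xK: "xK \<in> p"
        obtain x K where xKe: "xK = (x,K)" by fastforce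
        have "x \<in> cbox a b" using tag_in_interval[OF p(1)] xK xKe by blast
        then show "(case xK of (x, K) \<Rightarrow> norm (Henstock_Kurzweil_Integration.content K *\<^sub>R (f x - g x))) \<le> (case xK of (x, K) \<Rightarrow> Henstock_Kurzweil_Integration.content K *\<^sub>R k x)"
          using fg by (simp add: xKe mult_left_mono)
      qed
      also have "\<dots> < integral (cbox a b) k + e/6"
        using d2[OF p] unfolding real_norm_def by linarith
      finally show ?thesis using kl by simp
    qed
    have "norm ((\<Sum>(x,K)\<in>p1. Henstock_Kurzweil_Integration.content K *\<^sub>R f x) - (\<Sum>(x,K)\<in>p2. Henstock_Kurzweil_Integration.content K *\<^sub>R f x)) < e"
      if p1: "p1 tagged_division_of cbox a b" and 11: "d1 fine p1" and 21: "d2 fine p1"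
       and p2: "p2 tagged_division_of cbox a b" and 12: "d1 fine p2" and 22: "d2 fine p2" for p1 p2
    proof -
      let ?f1 = "(\<Sum>(x,K)\<in>p1. Henstock_Kurzweil_Integration.content K *\<^sub>R f x)" and ?f2 = "(\<Sum>(x,K)\<in>p2. Henstock_Kurzweil_Integration.content K *\<^sub>R f x)"
      let ?g1 = "(\<Sum>(x,K)\<in>p1. Henstock_Kurzweil_Integration.content K *\<^sub>R g x)" and ?g2 = "(\<Sum>(x,K)\<in>p2. Henstock_Kurzweil_Integration.content K *\<^sub>R g x)"
      let ?I = "integral (cbox a b) g"
      have eq: "?f1 - ?f2 = (?f1 - ?g1) + (?g1 - ?I) - (?g2 - ?I) - (?f2 - ?g2)" by simp
      have "norm (?f1 - ?f2) \<le> norm (?f1 - ?g1) + norm (?g1 - ?I) + norm (?g2 - ?I) + norm (?f2 - ?g2)"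
        unfolding eq
        using norm_triangle_ineq4[of "(?f1 - ?g1) + (?g1 - ?I) - (?g2 - ?I)" "?f2 - ?g2"]
          norm_triangle_ineq4[of "(?f1 - ?g1) + (?g1 - ?I)" "?g2 - ?I"]
          norm_triangle_ineq[of "?f1 - ?g1" "?g1 - ?I"] by linarith
      then show ?thesis using sk[OF p1 21] sk[OF p2 22] d1[OF p1 11] d1[OF p2 12] by linarith
    qed
    then show ?thesis
      by (rule_tac x="\<lambda>x. d1 x \<inter> d2 x" in exI)
        (auto simp: fine_Int intro: \<open>gauge d1\<close> \<open>gauge d2\<close>)
  qed
  then show ?thesis
    by (simp add: integrable_Cauchy)
qed

lemma uniform_bound_seq:
  fixes T :: "nat \<Rightarrow> 'a::banach \<Rightarrow>\<^sub>L 'b::real_normed_vector"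
  assumes bd: "\<And>x. bounded (range (\<lambda>n. T n x))"
  shows "bounded (range T)"
proof -
  define A where "A k = {x. \<forall>n. norm (T n x) \<le> real k}" for k :: nat
  have clA: "closed (A k)" for k
    unfolding A_def by (intro closed_Collect_all closed_Collect_le continuous_intros)
  have UA: "\<Union>(range A) = UNIV"
  proof safe
    fix x :: 'a
    obtain B where "\<forall>n. norm (T n x) \<le> B" using bd[of x] unfolding bounded_iff by auto
    moreover obtain k :: nat where "B \<le> real k" using real_arch_simple by blast
    ultimately have "x \<in> A k" unfolding A_def by (auto intro: order_trans)
    then show "x \<in> \<Union>(range A)" by blast
  qed auto
  have "\<exists>k. interior (A k) \<noteq> {}"
  proof (rule ccontr)
    assume "\<not> ?thesis"
    then have "euclidean interior_of \<Union>(range A) = {}"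
    proof (intro Baire_category_alt)
      show "completely_metrizable_space (euclidean :: 'a topology) \<or> locally_compact_space (euclidean :: 'a topology) \<and> regular_space (euclidean :: 'a topology)"
        using completely_metrizable_space_euclidean by blast
      show "countable (range A)" using countable_image[of UNIV A] by blast
      fix T assume "T \<in> range A"
      then obtain k where Tk: "T = A k" by blast
      have "closedin euclidean (A k)" using clA[of k] closed_closedin by blast
      moreover have "euclidean interior_of (A k) = {}"
        using \<open>\<not> (\<exists>k. interior (A k) \<noteq> {})\<close> by simp
      ultimately show "closedin euclidean T \<and> euclidean interior_of T = {}" using Tk by blast
    qed
    then show False using UA by simp
  qed
  then obtain k x0 where "x0 \<in> interior (A k)" by blast
  then obtain r where r: "r > 0" "ball x0 r \<subseteq> A k" using open_contains_ball_eq open_interior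
    by (metis interior_subset subset_trans)
  have "norm (T n) \<le> 4 * real k / r" for n
  proof (rule norm_blinfun_bound)
    show "0 \<le> 4 * real k / r" using r by simp
    fix y :: 'a
    show "norm (T n y) \<le> 4 * real k / r * norm y"
    proof (cases "y = 0")
      case True then show ?thesis by simp
    next
      case False
      define z where "z = (r/2 / norm y) *\<^sub>R y"
      have nz: "norm z = r/2" using False r by (simp add: z_def)
      have "x0 + z \<in> A k" using r nz by (intro subsetD[OF r(2)]) (simp add: dist_norm)
      moreover have "x0 \<in> A k" using r by (intro subsetD[OF r(2)]) simp
      ultimately have "norm (T n (x0 + z)) \<le> real k" "norm (T n x0) \<le> real k"
        unfolding A_def by auto
      then have Tz: "norm (T n z) \<le> 2 * real k"
        using norm_triangle_ineq4[of "T n (x0 + z)" "T n x0"] by (simp add: blinfun.add_right)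
      have "y = (2 * norm y / r) *\<^sub>R z" using False r by (simp add: z_def)
      then have "T n y = (2 * norm y / r) *\<^sub>R T n z" by (metis blinfun.scaleR_right)
      then have "norm (T n y) = (2 * norm y / r) * norm (T n z)" using r by simp
      also have "\<dots> \<le> (2 * norm y / r) * (2 * real k)"
        using Tz r by (intro mult_left_mono) auto
      finally show ?thesis by (simp add: field_simps)
    qed
  qed
  then show ?thesis unfolding bounded_iff by auto
qed

lemma joint_cont:
  fixes R :: "real^'n \<Rightarrow> ('x::banach \<Rightarrow>\<^sub>L 'y::real_normed_vector)"
  assumes Rc: "\<And>x. continuous_on S (\<lambda>t. R t x)" and hc: "continuous_on S h"
  shows "continuous_on S (\<lambda>u. R u (h u))"
  unfolding continuous_on_sequentially o_def
proof (intro allI ballI impI)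
  fix x a assume a: "a \<in> S" and H: "(\<forall>n. x n \<in> S) \<and> x \<longlonglongrightarrow> a"
  have Rlim: "(\<lambda>n. R (x n) y) \<longlonglongrightarrow> R a y" for y
    using Rc[of y] a H unfolding continuous_on_sequentially o_def by blast
  have "bounded (range (\<lambda>n. R (x n)))"
  proof (rule uniform_bound_seq)
    fix y show "bounded (range (\<lambda>n. R (x n) y))"
      using Rlim[of y] by (rule convergent_imp_bounded)
  qed
  then obtain B where B: "\<And>n. norm (R (x n)) \<le> B" unfolding bounded_iff by auto
  have hlim: "(\<lambda>n. h (x n)) \<longlonglongrightarrow> h a" using hc a H unfolding continuous_on_sequentially o_def by blast
  have nb: "norm (R (x n) v) \<le> norm v * B" for n v
  proof -
    have "norm (R (x n) v) \<le> norm (R (x n)) * norm v" by (rule norm_blinfun)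
    also have "\<dots> \<le> B * norm v" using B[of n] by (rule mult_right_mono) simp
    finally show ?thesis by (simp add: mult.commute)
  qed
  have "Zfun (\<lambda>n. h (x n) - h a) sequentially" using hlim unfolding tendsto_Zfun_iff .
  then have "Zfun (\<lambda>n. R (x n) (h (x n) - h a)) sequentially"
    by (rule Zfun_imp_Zfun[where K=B]) (rule always_eventually, rule allI, rule nb)
  then have z: "(\<lambda>n. R (x n) (h (x n) - h a)) \<longlonglongrightarrow> 0" unfolding tendsto_Zfun_iff by simp
  have "(\<lambda>n. R (x n) (h (x n) - h a) + R (x n) (h a)) \<longlonglongrightarrow> 0 + R a (h a)"
    by (intro tendsto_add z Rlim)
  then show "(\<lambda>n. R (x n) (h (x n))) \<longlonglongrightarrow> R a (h a)" by (simp add: blinfun.diff_right)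
qed

lemma has_integral_reflect_translate:
  fixes f :: "'a::euclidean_space \<Rightarrow> 'b::banach"
  assumes "(f has_integral i) S"
  shows "((\<lambda>x. f (c - x)) has_integral i) ((\<lambda>x. c - x) ` S)"
proof -
  have eqT: "(x \<in> (\<lambda>x. c - x) ` S) = (c - x \<in> S)" for x
  proof
    assume "x \<in> (\<lambda>x. c - x) ` S"
    then obtain y where "y \<in> S" "x = c - y" by blast
    then show "c - x \<in> S" by simp
  next
    assume "c - x \<in> S" then show "x \<in> (\<lambda>x. c - x) ` S" by (rule image_eqI[rotated]) simp
  qed
  show ?thesis
  proof (rule has_integral'[THEN iffD2], intro allI impI)
    fix e :: real assume e: "e > 0"
    from has_integral'[THEN iffD1, OF assms, rule_format, OF e] obtain B where "B > 0" and
      HB0: "\<forall>a b. ball 0 B \<subseteq> cbox a b \<longrightarrow> (\<exists>z. ((\<lambda>x. if x \<in> S then f x else 0) has_integral z) (cbox a b) \<and> norm (z - i) < e)"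
      by (elim exE conjE)
    have HB: "\<And>a b. ball 0 B \<subseteq> cbox a b \<Longrightarrow> (\<exists>z. ((\<lambda>x. if x \<in> S then f x else 0) has_integral z) (cbox a b) \<and> norm (z - i) < e)"
      using HB0 by blast
    show "\<exists>B>0. \<forall>a b. ball 0 B \<subseteq> cbox a b \<longrightarrow>
         (\<exists>z. ((\<lambda>x. if x \<in> (\<lambda>x. c - x) ` S then f (c - x) else 0) has_integral z) (cbox a b) \<and> norm (z - i) < e)"
    proof (intro exI[of _ "B + norm c"] conjI allI impI)
      show "0 < B + norm c" using \<open>B > 0\<close> by (simp add: add_pos_nonneg)
      fix a b :: 'a assume ab: "ball 0 (B + norm c) \<subseteq> cbox a b"
      have "ball 0 B \<subseteq> cbox (c - b) (c - a)"
      proof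
        fix y :: 'a assume "y \<in> ball 0 B"
        then have "norm y < B" by simp
        then have "norm (c - y) < B + norm c" using norm_triangle_ineq4[of c y] by linarith
        then have "c - y \<in> cbox a b" using ab by auto
        then show "y \<in> cbox (c - b) (c - a)" by (auto simp: mem_box inner_diff_left)
      qed
      then obtain z where hz: "((\<lambda>x. if x \<in> S then f x else 0) has_integral z) (cbox (c - b) (c - a))"
        and nz: "norm (z - i) < e" using HB by blast
      have im: "(\<lambda>x. (1 / (-1::real)) *\<^sub>R x + - ((1 / (-1::real)) *\<^sub>R c)) ` cbox (c - b) (c - a) = cbox a b"
      proof
        show "(\<lambda>x. (1 / (-1::real)) *\<^sub>R x + - ((1 / (-1::real)) *\<^sub>R c)) ` cbox (c - b) (c - a) \<subseteq> cbox a b"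
        proof
          fix y assume "y \<in> (\<lambda>x. (1 / (-1::real)) *\<^sub>R x + - ((1 / (-1::real)) *\<^sub>R c)) ` cbox (c - b) (c - a)"
          then obtain x where x: "x \<in> cbox (c - b) (c - a)" "y = c - x" by auto
          show "y \<in> cbox a b" unfolding mem_box
          proof (intro ballI)
            fix i :: 'a assume i: "i \<in> Basis"
            have "(c - b) \<bullet> i \<le> x \<bullet> i" "x \<bullet> i \<le> (c - a) \<bullet> i" using x(1) i by (auto simp: mem_box)
            moreover have "y \<bullet> i = c \<bullet> i - x \<bullet> i" using x(2) by (simp add: inner_diff_left)
            ultimately show "a \<bullet> i \<le> y \<bullet> i \<and> y \<bullet> i \<le> b \<bullet> i" by (simp add: inner_diff_left)
          qed
        qed
        show "cbox a b \<subseteq> (\<lambda>x. (1 / (-1::real)) *\<^sub>R x + - ((1 / (-1::real)) *\<^sub>R c)) ` cbox (c - b) (c - a)"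
        proof
          fix x assume "x \<in> cbox a b"
          then have "c - x \<in> cbox (c - b) (c - a)" by (auto simp: mem_box inner_diff_left)
          then show "x \<in> (\<lambda>x. (1 / (-1::real)) *\<^sub>R x + - ((1 / (-1::real)) *\<^sub>R c)) ` cbox (c - b) (c - a)"
            by (rule image_eqI[rotated]) simp
        qed
      qed
      have "((\<lambda>x. (\<lambda>x. if x \<in> S then f x else 0) ((-1::real) *\<^sub>R x + c)) has_integral (1 / (\<bar>-1::real\<bar> ^ DIM('a))) *\<^sub>R z)
          ((\<lambda>x. (1 / (-1::real)) *\<^sub>R x + - ((1 / (-1::real)) *\<^sub>R c)) ` cbox (c - b) (c - a))"
        by (rule has_integral_affinity[OF hz]) simp
      moreover have m1: "(-1::real) *\<^sub>R x + c = c - x" for x :: 'a by simp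
      ultimately have "((\<lambda>x. if c - x \<in> S then f (c - x) else 0) has_integral z) (cbox a b)"
        unfolding im m1 by simp
      then have "((\<lambda>x. if x \<in> (\<lambda>x. c - x) ` S then f (c - x) else 0) has_integral z) (cbox a b)"
        unfolding eqT .
      then show "\<exists>z. ((\<lambda>x. if x \<in> (\<lambda>x. c - x) ` S then f (c - x) else 0) has_integral z) (cbox a b) \<and> norm (z - i) < e"
        using nz by blast
    qed
  qed
qed

lemma image_pos_orthant: "(\<lambda>u. t - u) ` pos_orthant = lower_orthant (t::real^'n)"
proof
  show "(\<lambda>u. t - u) ` pos_orthant \<subseteq> lower_orthant t"
    by (auto simp: pos_orthant_def lower_orthant_def)
  show "lower_orthant t \<subseteq> (\<lambda>u. t - u) ` pos_orthant"
  proof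
    fix s assume "s \<in> lower_orthant t"
    then have "t - s \<in> pos_orthant" by (auto simp: pos_orthant_def lower_orthant_def)
    then show "s \<in> (\<lambda>u. t - u) ` pos_orthant" by (rule image_eqI[rotated]) simp
  qed
qed

lemma pos_orthant_ev:
  assumes "x \<in> pos_orthant"
  shows "\<forall>\<^sub>F m in sequentially. x \<in> cbox (\<chi> i. 1 / (real m + 1)) (\<chi> i. real m + 1 :: real^'n)"
proof -
  have "\<forall>\<^sub>F m in sequentially. 1 / (real m + 1) \<le> x $ i \<and> x $ i \<le> real m + 1" for i
  proof -
    have "0 < x $ i" using assms by (simp add: pos_orthant_def)
    then obtain n1 where n1: "inverse (real (Suc n1)) < x $ i" using reals_Archimedean by blast
    obtain n2 :: nat where n2: "x $ i \<le> real n2" using real_arch_simple by blast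
    show ?thesis unfolding eventually_sequentially
    proof (intro exI[of _ "max n1 n2"] allI impI)
      fix m assume m: "max n1 n2 \<le> m"
      have "1 / (real m + 1) \<le> inverse (real (Suc n1))"
        using m by (simp add: field_simps)
      moreover have "x $ i \<le> real m + 1" using m n2 by linarith
      ultimately show "1 / (real m + 1) \<le> x $ i \<and> x $ i \<le> real m + 1" using n1 by linarith
    qed
  qed
  then have "\<forall>\<^sub>F m in sequentially. \<forall>i. 1 / (real m + 1) \<le> x $ i \<and> x $ i \<le> real m + 1"
    by (rule eventually_all_finite)
  then show ?thesis by (simp add: mem_box_cart)
qed

lemma cbox_sub_pos_orthant:
  "cbox (\<chi> i. 1 / (real m + 1)) (\<chi> i. real m + 1 :: real^'n) \<subseteq> pos_orthant"
proof
  fix x :: "real^'n" assume "x \<in> cbox (\<chi> i. 1 / (real m + 1)) (\<chi> i. real m + 1)"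
  then have "\<forall>i. 1 / (real m + 1) \<le> x $ i" by (simp add: mem_box_cart)
  moreover have "0 < 1 / (real m + 1)" using divide_pos_pos[of 1 "real m + 1"] by simp
  ultimately have "\<forall>i. 0 < x $ i" by (meson less_le_trans)
  then show "x \<in> pos_orthant" by (simp add: pos_orthant_def)
qed

lemma integrable_UNIV_cbox:
  fixes f :: "'a::euclidean_space \<Rightarrow> 'b::banach"
  assumes "f integrable_on UNIV" shows "f integrable_on cbox a b"
  using integrable_altD(1)[OF assms, of a b] by simp

lemma INT:
  fixes F :: "real^'n \<Rightarrow> 'b::banach"
  assumes Fc: "continuous_on pos_orthant F" and Gi: "G integrable_on pos_orthant"
    and FG: "\<And>x. x \<in> pos_orthant \<Longrightarrow> norm (F x) \<le> G x"
  shows "F integrable_on pos_orthant"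
proof (rule integrable_on_all_intervals_integrable_bound[OF _ FG Gi])
  fix a b :: "real^'n"
  define K where "K m = cbox (\<chi> i. 1 / (real m + 1)) (\<chi> i. real m + 1 :: real^'n)" for m :: nat
  define Gp where "Gp = (\<lambda>x. if x \<in> pos_orthant then G x else 0)"
  define GK where "GK m = (\<lambda>x. if x \<in> K m then G x else 0)" for m
  have G0: "x \<in> pos_orthant \<Longrightarrow> 0 \<le> G x" for x using FG[of x] norm_ge_zero[of "F x"] by linarith
  have Kpos: "K m \<subseteq> pos_orthant" for m unfolding K_def by (rule cbox_sub_pos_orthant)
  have GpU: "Gp integrable_on UNIV" using Gi by (simp add: Gp_def integrable_restrict_UNIV)
  have GKi: "G integrable_on K m" for m
  proof -
    have "Gp integrable_on K m" unfolding K_def Gp_def by (rule integrable_altD(1)[OF Gi])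
    then show ?thesis by (rule integrable_eq) (use Kpos in \<open>auto simp: Gp_def\<close>)
  qed
  have GKU: "GK m integrable_on UNIV" for m using GKi[of m] by (simp add: GK_def integrable_restrict_UNIV)
  have lim: "(\<lambda>m. integral UNIV (GK m)) \<longlonglongrightarrow> integral UNIV Gp"
  proof (rule dominated_convergence(2)[of GK UNIV Gp Gp])
    show "GK k integrable_on UNIV" for k by (rule GKU)
    show "Gp integrable_on UNIV" by (rule GpU)
    show "norm (GK k x) \<le> Gp x" for k x
      using Kpos[of k] G0[of x] by (auto simp: GK_def Gp_def)
    show "(\<lambda>k. GK k x) \<longlonglongrightarrow> Gp x" for x
    proof (cases "x \<in> pos_orthant")
      case True
      have "\<forall>\<^sub>F m in sequentially. GK m x = Gp x"
        using pos_orthant_ev[OF True] by (rule eventually_mono) (simp add: GK_def Gp_def K_def True)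
      then show ?thesis by (rule tendsto_eventually)
    next
      case False
      then have "GK m x = Gp x" for m using Kpos[of m] by (auto simp: GK_def Gp_def)
      then show ?thesis by simp
    qed
  qed
  show "(\<lambda>x. if x \<in> pos_orthant then F x else 0) integrable_on cbox a b"
  proof (rule integrable_approx_cbox)
    fix e :: real assume e: "e > 0"
    from lim[THEN tendstoD, OF e] obtain m where m: "dist (integral UNIV (GK m)) (integral UNIV Gp) < e"
      unfolding eventually_sequentially by blast
    define g where "g = (\<lambda>x. if x \<in> K m then F x else 0)"
    define k where "k = (\<lambda>x. Gp x - GK m x)"
    have "F integrable_on K m" unfolding K_def
      by (rule integrable_continuous, rule continuous_on_subset[OF Fc], rule cbox_sub_pos_orthant)
    then have gU: "g integrable_on UNIV" by (simp add: g_def integrable_restrict_UNIV)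
    have kU: "k integrable_on UNIV" unfolding k_def by (intro integrable_diff GpU GKU)
    have k0: "0 \<le> k x" for x using Kpos[of m] G0[of x] by (auto simp: k_def GK_def Gp_def)
    have "integral (cbox a b) k \<le> integral UNIV k"
      by (rule integral_subset_le) (auto intro: integrable_UNIV_cbox kU k0)
    also have "\<dots> = integral UNIV Gp - integral UNIV (GK m)"
      unfolding k_def by (rule integral_diff[OF GpU GKU])
    also have "\<dots> < e" using m by (simp add: dist_real_def abs_less_iff)
    finally have kl: "integral (cbox a b) k < e" .
    have bd: "norm ((if x \<in> pos_orthant then F x else 0) - g x) \<le> k x" for x
      using Kpos[of m] FG[of x] by (auto simp: g_def k_def GK_def Gp_def)
    show "\<exists>g k. g integrable_on cbox a b \<and> k integrable_on cbox a b \<and> integral (cbox a b) k < e \<and>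
           (\<forall>x\<in>cbox a b. norm ((if x \<in> pos_orthant then F x else 0) - g x) \<le> k x)"
      using integrable_UNIV_cbox[OF gU] integrable_UNIV_cbox[OF kU] kl bd by blast
  qed
qed

lemma conv_props:
  fixes R :: "real^'n \<Rightarrow> ('x::banach \<Rightarrow>\<^sub>L 'y::banach)"
  assumes Rc: "\<And>x. continuous_on pos_orthant (\<lambda>t. R t x)"
    and Ri: "(\<lambda>t. norm (R t)) integrable_on pos_orthant"
    and hc: "continuous_on pos_orthant h" and hM: "\<And>u. u \<in> pos_orthant \<Longrightarrow> norm (h u) \<le> M"
  shows "(\<lambda>u. R u (h u)) integrable_on pos_orthant"
    and "(\<lambda>u. norm (R u (h u))) integrable_on pos_orthant"
    and "norm (integral pos_orthant (\<lambda>u. R u (h u))) \<le> M * integral pos_orthant (\<lambda>t. norm (R t))"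
    and "norm (integral pos_orthant (\<lambda>u. R u (h u))) \<le> integral pos_orthant (\<lambda>u. norm (R u (h u)))"
proof -
  have c: "continuous_on pos_orthant (\<lambda>u. R u (h u))" by (rule joint_cont[OF Rc hc])
  have Gi: "(\<lambda>u. M * norm (R u)) integrable_on pos_orthant"
    using integrable_on_cmult_left[OF Ri, of M] by simp
  have bd: "norm (R u (h u)) \<le> M * norm (R u)" if "u \<in> pos_orthant" for u
  proof -
    have "norm (R u (h u)) \<le> norm (R u) * norm (h u)" by (rule norm_blinfun)
    also have "\<dots> \<le> norm (R u) * M" using hM[OF that] by (rule mult_left_mono) simp
    finally show ?thesis by (simp add: mult.commute)
  qed
  show i1: "(\<lambda>u. R u (h u)) integrable_on pos_orthant" by (rule INT[OF c Gi bd])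
  show i2: "(\<lambda>u. norm (R u (h u))) integrable_on pos_orthant"
    by (rule INT[OF continuous_on_norm[OF c] Gi]) (simp add: bd)
  have "norm (integral pos_orthant (\<lambda>u. R u (h u))) \<le> integral pos_orthant (\<lambda>u. M * norm (R u))"
    by (rule integral_norm_bound_integral[OF i1 Gi bd])
  also have "\<dots> = M * integral pos_orthant (\<lambda>t. norm (R t))"
    by (rule integral_mult[OF Ri, symmetric])
  finally show "norm (integral pos_orthant (\<lambda>u. R u (h u))) \<le> M * integral pos_orthant (\<lambda>t. norm (R t))" .
  show "norm (integral pos_orthant (\<lambda>u. R u (h u))) \<le> integral pos_orthant (\<lambda>u. norm (R u (h u)))"
    by (rule integral_norm_bound_integral[OF i1 i2]) simp
qed

theorem theorem2p53:
  fixes Rc :: "(nat \<Rightarrow> real^'n) set"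
    and R :: "real^'n \<Rightarrow> ('x::banach \<Rightarrow>\<^sub>L 'y::banach)"
    and f :: "real^'n \<Rightarrow> 'x"
  assumes "Rc \<noteq> {}"
    and "\<And>x. continuous_on pos_orthant (\<lambda>t. R t x)"
    and "(\<lambda>t. norm (R t)) integrable_on pos_orthant"
    and "bounded (range f)"
    and "multi_almost_periodic Rc f"
  shows "(\<forall>t. (\<lambda>s. R (t - s) (f s)) integrable_on lower_orthant t
            \<and> (\<lambda>s. norm (R (t - s) (f s))) integrable_on lower_orthant t)
     \<and> multi_almost_periodic Rc
         (\<lambda>t. integral (lower_orthant t) (\<lambda>s. R (t - s) (f s)))"
proof -
  note Rc = assms(2) and Ri = assms(3)
  obtain M where M: "\<And>s. norm (f s) \<le> M" using assms(4) unfolding bounded_iff by auto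
  have fc: "continuous_on UNIV f" using assms(5) unfolding multi_almost_periodic_def by blast
  have fct: "continuous_on A (\<lambda>u. f (t - u))" for A t
    by (rule continuous_on_compose2[OF fc]) (auto intro!: continuous_intros)
  have fdc: "continuous_on A (\<lambda>u. f (t1 - u) - f (t2 - u))" for A t1 t2
    by (intro continuous_on_diff fct)
  have fd2: "norm (f p - f q) \<le> 2 * M" for p q
    using norm_triangle_ineq4[of "f p" "f q"] M[of p] M[of q] by linarith
  define C where "C = integral pos_orthant (\<lambda>t. norm (R t))"
  define G where "G t = integral pos_orthant (\<lambda>u. R u (f (t - u)))" for t
  note cp = conv_props[OF Rc Ri]
  have P1: "(\<lambda>u. R u (f (t - u))) integrable_on pos_orthant" for t
    by (rule cp(1)[OF fct]) (rule M)
  have P2: "(\<lambda>u. norm (R u (f (t - u)))) integrable_on pos_orthant" for t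
    by (rule cp(2)[OF fct]) (rule M)
  have W: "((\<lambda>s. R (t - s) (f s)) has_integral G t) (lower_orthant t)" for t
    using has_integral_reflect_translate[OF integrable_integral[OF P1], of t t]
    by (simp add: image_pos_orthant G_def)
  have Wn: "(\<lambda>s. norm (R (t - s) (f s))) integrable_on (lower_orthant t)" for t
    using has_integral_reflect_translate[OF integrable_integral[OF P2], of t t]
    by (auto simp: image_pos_orthant has_integral_integrable)
  have part1: "\<forall>t. (\<lambda>s. R (t - s) (f s)) integrable_on lower_orthant t
            \<and> (\<lambda>s. norm (R (t - s) (f s))) integrable_on lower_orthant t"
    using W Wn has_integral_integrable by blast
  have Feq: "(\<lambda>t. integral (lower_orthant t) (\<lambda>s. R (t - s) (f s))) = G"
    by (rule ext) (rule integral_unique[OF W])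
  have C0: "0 \<le> C" unfolding C_def by (rule integral_nonneg[OF Ri]) simp
  have Gd: "G t1 - G t2 = integral pos_orthant (\<lambda>u. R u (f (t1 - u) - f (t2 - u)))" for t1 t2
  proof -
    have "G t1 - G t2 = integral pos_orthant (\<lambda>u. R u (f (t1 - u)) - R u (f (t2 - u)))"
      unfolding G_def by (rule integral_diff[OF P1 P1, symmetric])
    also have "\<dots> = integral pos_orthant (\<lambda>u. R u (f (t1 - u) - f (t2 - u)))"
      by (simp add: blinfun.diff_right)
    finally show ?thesis .
  qed
  have Gdiff: "norm (G t1 - G t2) \<le> \<epsilon> * C" if "\<And>u. norm (f (t1 - u) - f (t2 - u)) \<le> \<epsilon>" for t1 t2 \<epsilon>
    unfolding Gd C_def by (rule cp(3)[OF fdc]) (rule that)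
  have Gc: "continuous_on UNIV G"
    unfolding continuous_on_sequentially o_def
  proof (intro allI ballI impI)
    fix x :: "nat \<Rightarrow> real^'n" and a :: "real^'n" assume "(\<forall>n. x n \<in> UNIV) \<and> x \<longlonglongrightarrow> a"
    then have xa: "x \<longlonglongrightarrow> a" by blast
    define \<psi> where "\<psi> n u = norm (R u (f (x n - u) - f (a - u)))" for n u
    have \<psi>i: "\<psi> n integrable_on pos_orthant" for n
      unfolding \<psi>_def by (rule cp(2)[OF fdc, where M="2 * M"]) (rule fd2)
    have H1: "(\<lambda>u. 2 * M * norm (R u)) integrable_on pos_orthant"
      using integrable_on_cmult_left[OF Ri, of "2 * M"] by simp
    have H2: "norm (\<psi> k u) \<le> 2 * M * norm (R u)" if "u \<in> pos_orthant" for k u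
    proof -
      have "norm (\<psi> k u) \<le> norm (R u) * norm (f (x k - u) - f (a - u))"
        unfolding \<psi>_def by (simp add: norm_blinfun)
      also have "\<dots> \<le> norm (R u) * (2 * M)" by (rule mult_left_mono[OF fd2]) simp
      finally show ?thesis by (simp add: mult.commute)
    qed
    have H3: "(\<lambda>k. \<psi> k u) \<longlonglongrightarrow> 0" if "u \<in> pos_orthant" for u
    proof -
      have ic: "isCont f (a - u)" using fc by (simp add: continuous_on_eq_continuous_at)
      have "(\<lambda>k. f (x k - u)) \<longlonglongrightarrow> f (a - u)"
        by (rule isCont_tendsto_compose[OF ic]) (intro tendsto_diff xa tendsto_const)
      then have "(\<lambda>k. f (x k - u) - f (a - u)) \<longlonglongrightarrow> 0" by (simp add: LIM_zero_iff)
      then have "(\<lambda>k. R u (f (x k - u) - f (a - u))) \<longlonglongrightarrow> R u 0"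
        by (rule bounded_linear.tendsto[OF blinfun.bounded_linear_right])
      then show ?thesis unfolding \<psi>_def by (intro tendsto_norm_zero) simp
    qed
    note dc = dominated_convergence(2)[OF \<psi>i H1 H2 H3]
    have lim0: "(\<lambda>n. integral pos_orthant (\<psi> n)) \<longlonglongrightarrow> 0" using dc by simp
    have "norm (G (x n) - G a) \<le> integral pos_orthant (\<psi> n)" for n
      unfolding Gd \<psi>_def by (rule cp(4)[OF fdc, where M="2 * M"]) (rule fd2)
    then have "(\<lambda>n. G (x n) - G a) \<longlonglongrightarrow> 0"
      by (intro Lim_null_comparison[OF always_eventually lim0]) blast
    then show "(\<lambda>n. G (x n)) \<longlonglongrightarrow> G a" by (simp add: LIM_zero_iff)
  qed
  have "multi_almost_periodic Rc G"
    unfolding multi_almost_periodic_def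
  proof (intro conjI Gc ballI)
    fix b assume "b \<in> Rc"
    then obtain r g' where r: "strict_mono r"
      and ul: "uniform_limit UNIV (\<lambda>l t. f (t + b (r l))) g' sequentially"
      using assms(5) unfolding multi_almost_periodic_def by blast
    have Cf: "uniformly_Cauchy_on UNIV (\<lambda>l t. f (t + b (r l)))"
      by (rule uniformly_convergent_Cauchy) (use ul in \<open>auto simp: uniformly_convergent_on_def\<close>)
    have "uniformly_Cauchy_on UNIV (\<lambda>l t. G (t + b (r l)))"
      unfolding uniformly_Cauchy_on_def
    proof (intro allI impI)
      fix e :: real assume e: "e > 0"
      define e' where "e' = e / (C + 1)"
      have e': "e' > 0" using e C0 by (simp add: e'_def)
      obtain N where N: "\<And>x m n. m \<ge> N \<Longrightarrow> n \<ge> N \<Longrightarrow> dist (f (x + b (r m))) (f (x + b (r n))) < e'"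
        using Cf e' unfolding uniformly_Cauchy_on_def by (meson UNIV_I)
      show "\<exists>M. \<forall>x\<in>UNIV. \<forall>m\<ge>M. \<forall>n\<ge>M. dist (G (x + b (r m))) (G (x + b (r n))) < e"
      proof (intro exI[of _ N] ballI allI impI)
        fix t m n assume mn: "m \<ge> N" "n \<ge> N"
        have "norm (G (t + b (r m)) - G (t + b (r n))) \<le> e' * C"
        proof (rule Gdiff)
          fix u
          have eq: "t + b (r k) - u = (t - u) + b (r k)" for k by (simp add: algebra_simps)
          show "norm (f (t + b (r m) - u) - f (t + b (r n) - u)) \<le> e'"
            using N[OF mn, of "t - u"] unfolding eq by (simp add: dist_norm)
        qed
        also have "e' * C < e"
        proof -
          have "e' * C = e * (C / (C + 1))" by (simp add: e'_def)
          also have "\<dots> < e * 1" using e C0 by (intro mult_strict_left_mono) auto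
          finally show ?thesis by simp
        qed
        finally show "dist (G (t + b (r m))) (G (t + b (r n))) < e" by (simp add: dist_norm)
      qed
    qed
    then have "uniformly_convergent_on UNIV (\<lambda>l t. G (t + b (r l)))"
      by (simp add: uniformly_convergent_eq_Cauchy)
    then obtain l where "uniform_limit UNIV (\<lambda>l t. G (t + b (r l))) l sequentially"
      unfolding uniformly_convergent_on_def by blast
    then show "\<exists>r g'. strict_mono r \<and> uniform_limit UNIV (\<lambda>l t. G (t + b (r l))) g' sequentially"
      using r by blast
  qed
  then show ?thesis using part1 Feq by simp
qed

end
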